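(* Let $\Gamma\subseteq\mathbb R^n$ be an open convex set, $S\subseteq\Gamma$ a nonempty convex set, and $f:\Gamma\to\mathbb R$ a continuously differentiable function that is quasiconvex on $\Gamma$. Let $\bar S=\arg\min\{f(x)\mid x\in S\}$, and suppose $\bar x\in\bar S$ with $\nabla f(\bar x)\neq 0$. Define \[ \begin{aligned} S_1&:=\{x\in S\mid \nabla f(x)^T(\bar x-x)=0,\ \nabla f(x)\ne0\},\\ S_2&:=\{x\in S\mid \nabla f(x)^T(\bar x-x)\ge 0,\ \nabla f(x)\ne0\},\\ S_3&:=\{x\in S\mid \nabla f(x)^T(\bar x-x)=\nabla f(\bar x)^T(x-\bar x),\ \nabla f(x)\ne0\},\\ S_4&:=\{x\in S\mid \nabla f(x)^T(\bar x-x)\ge\nabla f(\bar x)^T(x-\bar x),\ \nabla f(x)\ne0\},\\ S_5&:=\{x\in S\mid \nabla f(x)^T(\bar x-x)=\nabla f(\bar x)^T(x-\bar x)=0,\ \nabla f(x)\ne0\}. \end{aligned} \] Then $\bar S=S_1=S_2=S_3=S_4=S_5$.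
   Context: A function $f:\Gamma\to\mathbb R$ on a convex set $\Gamma\subseteq\mathbb R^n$ is quasiconvex on $\Gamma$ iff $f(x+t(y-x))\le\max\{f(x),f(y)\}$ for all $x,y\in\Gamma$ and $t\in[0,1]$. *)

theory Defs
  imports "HOL-Analysis.Analysis"
begin

definition quasiconvex_on :: "('a::real_vector) set \<Rightarrow> ('a \<Rightarrow> real) \<Rightarrow> bool" where
  "quasiconvex_on \<Gamma> f \<longleftrightarrow>
     (\<forall>x\<in>\<Gamma>. \<forall>y\<in>\<Gamma>. \<forall>t\<in>{0..1::real}. f (x + t *\<^sub>R (y - x)) \<le> max (f x) (f y))"

definition argmin_on :: "'a set \<Rightarrow> ('a \<Rightarrow> real) \<Rightarrow> 'a set" where
  "argmin_on S f = {x \<in> S. \<forall>y\<in>S. f x \<le> f y}"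

end

theory Submission
  imports Defs
begin

lemma dir_lim:
  fixes f :: "'a::real_inner \<Rightarrow> real"
  assumes "(f has_derivative (\<lambda>h. g \<bullet> h)) (at x)"
  shows "((\<lambda>s. (f (x + s *\<^sub>R v) - f x) / s) \<longlongrightarrow> g \<bullet> v) (at_right 0)"
proof -
  have "((\<lambda>s. x + s *\<^sub>R v) has_derivative (\<lambda>s. s *\<^sub>R v)) (at 0)"
    by (auto intro!: derivative_eq_intros)
  from has_derivative_compose[OF this, of f "\<lambda>h. g \<bullet> h"] assms
  have D: "((\<lambda>s. f (x + s *\<^sub>R v)) has_derivative (\<lambda>s. g \<bullet> (s *\<^sub>R v))) (at 0)" by simp
  hence "((\<lambda>s. f (x + s *\<^sub>R v)) has_field_derivative (g \<bullet> v)) (at 0)"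
  proof -
    have e: "(\<lambda>s. g \<bullet> (s *\<^sub>R v)) = (*) (g \<bullet> v)" by (auto simp: fun_eq_iff)
    show ?thesis unfolding has_field_derivative_def using D e by simp
  qed
  hence "((\<lambda>s. (f (x + s *\<^sub>R v) - f x) / s) \<longlongrightarrow> g \<bullet> v) (at 0)"
    unfolding has_field_derivative_iff by simp
  thus ?thesis by (rule filterlim_mono) (simp_all add: at_le)
qed

lemma ev01: "\<forall>\<^sub>F s in at_right (0::real). 0 < s \<and> s < 1"
  unfolding eventually_at_right[of 0 "1::real", OF zero_less_one] by (rule exI[of _ 1]) auto

lemma path_lim:
  fixes x v :: "'a::real_normed_vector"
  shows "((\<lambda>s. x + s *\<^sub>R v) \<longlongrightarrow> x) (at_right 0)"
proof -
  have "((\<lambda>s. x + s *\<^sub>R v) \<longlongrightarrow> x + 0 *\<^sub>R v) (at_right 0)"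
    by (intro tendsto_intros)
  thus ?thesis by simp
qed

lemma seg_in:
  assumes "convex S" "x \<in> S" "y \<in> S" "0 \<le> t" "t \<le> 1"
  shows "x + t *\<^sub>R (y - x) \<in> S"
proof -
  have "x + t *\<^sub>R (y - x) = (1 - t) *\<^sub>R x + t *\<^sub>R y" by (simp add: algebra_simps)
  thus ?thesis using convexD_alt[OF assms] by simp
qed

lemma qc_first_order:
  fixes f :: "'a::real_inner \<Rightarrow> real"
  assumes qc: "quasiconvex_on \<Gamma> f" and "x \<in> \<Gamma>" "z \<in> \<Gamma>" "f z \<le> f x"
    and d: "(f has_derivative (\<lambda>h. g \<bullet> h)) (at x)"
  shows "g \<bullet> (z - x) \<le> 0"
proof (rule tendsto_upperbound[OF dir_lim[OF d, of "z - x"]])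
  show "\<forall>\<^sub>F s in at_right 0. 0 \<ge> (f (x + s *\<^sub>R (z - x)) - f x) / s"
    using ev01
  proof (rule eventually_mono)
    fix s :: real assume s: "0 < s \<and> s < 1"
    have "\<forall>t\<in>{0..1}. f (x + t *\<^sub>R (z - x)) \<le> max (f x) (f z)"
      using qc assms(2,3) unfolding quasiconvex_on_def by blast
    hence "f (x + s *\<^sub>R (z - x)) \<le> max (f x) (f z)" using s by auto
    hence "f (x + s *\<^sub>R (z - x)) - f x \<le> 0" using assms by simp
    thus "0 \<ge> (f (x + s *\<^sub>R (z - x)) - f x) / s" using s by (simp add: divide_nonpos_pos)
  qed
qed simp

lemma const_zero:
  fixes f :: "'a::real_inner \<Rightarrow> real"
  assumes c: "\<And>s. 0 \<le> s \<Longrightarrow> s \<le> 1 \<Longrightarrow> f (x + s *\<^sub>R (z - x)) = f x"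
    and d: "(f has_derivative (\<lambda>h. g \<bullet> h)) (at x)"
  shows "g \<bullet> (z - x) = 0"
proof -
  have ev: "\<forall>\<^sub>F s in at_right 0. (f (x + s *\<^sub>R (z - x)) - f x) / s = 0"
    using ev01 by (rule eventually_mono) (simp add: c)
  have "g \<bullet> (z - x) \<le> 0"
    by (rule tendsto_upperbound[OF dir_lim[OF d, of "z - x"]]) (use ev in \<open>auto elim: eventually_mono\<close>)
  moreover have "g \<bullet> (z - x) \<ge> 0"
    by (rule tendsto_lowerbound[OF dir_lim[OF d, of "z - x"]]) (use ev in \<open>auto elim: eventually_mono\<close>)
  ultimately show ?thesis by simp
qed

lemma opt_cond:
  fixes f :: "'a::real_inner \<Rightarrow> real"
  assumes c: "\<And>s. 0 \<le> s \<Longrightarrow> s \<le> 1 \<Longrightarrow> f (x + s *\<^sub>R (z - x)) \<ge> f x"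
    and d: "(f has_derivative (\<lambda>h. g \<bullet> h)) (at x)"
  shows "g \<bullet> (z - x) \<ge> 0"
proof (rule tendsto_lowerbound[OF dir_lim[OF d, of "z - x"]])
  show "\<forall>\<^sub>F s in at_right 0. 0 \<le> (f (x + s *\<^sub>R (z - x)) - f x) / s"
    using ev01 by (rule eventually_mono) (use c in auto)
qed simp

lemma pseudo:
  fixes f :: "'a::real_inner \<Rightarrow> real"
  assumes qc: "quasiconvex_on \<Gamma> f" and op: "open \<Gamma>" and x: "x \<in> \<Gamma>" and y: "y \<in> \<Gamma>"
    and dx: "(f has_derivative (\<lambda>h. g \<bullet> h)) (at x)"
    and dy: "(f has_derivative (\<lambda>h. g' \<bullet> h)) (at y)"
    and g: "g \<noteq> 0" and ge: "g \<bullet> (y - x) \<ge> 0"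
  shows "f y \<ge> f x"
proof (rule ccontr)
  assume "\<not> f y \<ge> f x"
  hence lt: "f y < f x" by simp
  have "isCont f y" using has_derivative_continuous[OF dy] by simp
  from isCont_tendsto_compose[OF this path_lim[of y g]]
  have L: "((\<lambda>s. f (y + s *\<^sub>R g)) \<longlongrightarrow> f y) (at_right 0)" .
  have e1: "\<forall>\<^sub>F s in at_right 0. f (y + s *\<^sub>R g) \<in> {..<f x}"
    by (rule topological_tendstoD[OF L]) (use lt in auto)
  have e2: "\<forall>\<^sub>F s in at_right 0. y + s *\<^sub>R g \<in> \<Gamma>"
    by (rule topological_tendstoD[OF path_lim op y])
  have "\<forall>\<^sub>F s in at_right (0::real). (0 < s \<and> s < 1) \<and> f (y + s *\<^sub>R g) \<in> {..<f x} \<and> y + s *\<^sub>R g \<in> \<Gamma>"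
    using ev01 e1 e2 by eventually_elim auto
  moreover have "at_right (0::real) \<noteq> bot" by simp
  ultimately obtain s where s: "0 < s" "f (y + s *\<^sub>R g) < f x" "y + s *\<^sub>R g \<in> \<Gamma>"
    using eventually_happens'[of "at_right (0::real)"] by blast
  have "g \<bullet> (y + s *\<^sub>R g - x) \<le> 0"
    by (rule qc_first_order[OF qc x s(3) _ dx]) (use s in simp)
  moreover have "g \<bullet> (y + s *\<^sub>R g - x) = g \<bullet> (y - x) + s * (g \<bullet> g)"
    by (simp add: algebra_simps inner_diff_right inner_add_right)
  moreover have "g \<bullet> g > 0" using g by simp
  ultimately show False using ge s(1) by (smt (verit) mult_pos_pos)
qed


lemma grad_nonzero:
  fixes f :: "'a::real_inner \<Rightarrow> real" and gradf :: "'a \<Rightarrow> 'a"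
  assumes qc: "quasiconvex_on \<Gamma> f" and op: "open \<Gamma>" and cv: "convex \<Gamma>"
    and x: "x \<in> \<Gamma>" and xb: "xb \<in> \<Gamma>"
    and seg: "\<And>s. 0 \<le> s \<Longrightarrow> s \<le> 1 \<Longrightarrow> f (xb + s *\<^sub>R (x - xb)) = f xb"
    and grad: "\<And>x. x \<in> \<Gamma> \<Longrightarrow> (f has_derivative (\<lambda>h. gradf x \<bullet> h)) (at x)"
    and cont: "continuous_on \<Gamma> gradf"
    and nz: "gradf xb \<noteq> 0"
  shows "gradf x \<noteq> 0"
proof
  assume g0: "gradf x = 0"
  define d where "d = gradf xb"
  define c where "c = d \<bullet> d"
  have cpos: "c > 0" using nz unfolding c_def d_def by simp
  have fx: "f x = f xb" using seg[of 1] by simp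
  have "isCont gradf xb" using cont op xb continuous_on_eq_continuous_at by blast
  from isCont_tendsto_compose[OF this path_lim[of xb "x - xb"]]
  have "((\<lambda>l. gradf (xb + l *\<^sub>R (x - xb))) \<longlongrightarrow> gradf xb) (at_right 0)" .
  hence "((\<lambda>l. gradf (xb + l *\<^sub>R (x - xb)) \<bullet> d) \<longlongrightarrow> c) (at_right 0)"
    unfolding c_def d_def by (intro tendsto_intros)
  hence "\<forall>\<^sub>F l in at_right 0. gradf (xb + l *\<^sub>R (x - xb)) \<bullet> d \<in> {c/2<..}"
    by (rule topological_tendstoD) (use cpos in auto)
  hence "\<forall>\<^sub>F l in at_right (0::real). (0 < l \<and> l < 1) \<and> gradf (xb + l *\<^sub>R (x - xb)) \<bullet> d \<in> {c/2<..}"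
    using ev01 by eventually_elim auto
  moreover have "at_right (0::real) \<noteq> bot" by simp
  ultimately obtain l where l: "0 < l" "l < 1" "gradf (xb + l *\<^sub>R (x - xb)) \<bullet> d > c/2"
    using eventually_happens'[of "at_right (0::real)"] by auto
  define xt where "xt = xb + l *\<^sub>R (x - xb)"
  define a where "a = gradf xt \<bullet> d"
  have a: "a > c/2" using l unfolding a_def xt_def by simp
  have xtG: "xt \<in> \<Gamma>" unfolding xt_def using seg_in[OF cv xb x] l by simp
  have fxt: "f xt = f xb" unfolding xt_def using seg l by simp
  define K where "K = 2 / l"
  define M where "M = l * K + (1 - l)"
  have M: "M = 3 - l" unfolding M_def K_def using l by simp
  define P where "P = (\<lambda>s::real. x + s *\<^sub>R (K *\<^sub>R d))"
  define Q where "Q = (\<lambda>s::real. xb + s *\<^sub>R d)"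
  define R where "R = (\<lambda>s::real. xt + s *\<^sub>R (M *\<^sub>R d))"
  have RPQ: "R s = P s + (1 - l) *\<^sub>R (Q s - P s)" for s
    unfolding R_def P_def Q_def xt_def M_def by (simp add: algebra_simps)
  have LR: "((\<lambda>s. (f (R s) - f xt) / s) \<longlongrightarrow> gradf xt \<bullet> (M *\<^sub>R d)) (at_right 0)"
    unfolding R_def by (rule dir_lim[OF grad[OF xtG]])
  have LP: "((\<lambda>s. (f (P s) - f x) / s) \<longlongrightarrow> gradf x \<bullet> (K *\<^sub>R d)) (at_right 0)"
    unfolding P_def by (rule dir_lim[OF grad[OF x]])
  have LQ: "((\<lambda>s. (f (Q s) - f xb) / s) \<longlongrightarrow> gradf xb \<bullet> d) (at_right 0)"
    unfolding Q_def by (rule dir_lim[OF grad[OF xb]])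
  have LM: "((\<lambda>s. max ((f (P s) - f x) / s) ((f (Q s) - f xb) / s)) \<longlongrightarrow> max (gradf x \<bullet> (K *\<^sub>R d)) (gradf xb \<bullet> d)) (at_right 0)"
    by (intro tendsto_max LP LQ)
  have eP: "\<forall>\<^sub>F s in at_right 0. P s \<in> \<Gamma>"
    unfolding P_def by (rule topological_tendstoD[OF path_lim op x])
  have eQ: "\<forall>\<^sub>F s in at_right 0. Q s \<in> \<Gamma>"
    unfolding Q_def by (rule topological_tendstoD[OF path_lim op xb])
  have ev: "\<forall>\<^sub>F s in at_right 0. (f (R s) - f xt) / s \<le> max ((f (P s) - f x) / s) ((f (Q s) - f xb) / s)"
    using ev01 eP eQ
  proof eventually_elim
    case (elim s)
    have "\<forall>t\<in>{0..1}. f (P s + t *\<^sub>R (Q s - P s)) \<le> max (f (P s)) (f (Q s))"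
      using qc elim unfolding quasiconvex_on_def by blast
    hence "f (R s) \<le> max (f (P s)) (f (Q s))" using l unfolding RPQ by auto
    hence "f (R s) - f xb \<le> max (f (P s) - f xb) (f (Q s) - f xb)" by linarith
    hence "(f (R s) - f xb) / s \<le> max (f (P s) - f xb) (f (Q s) - f xb) / s"
      using elim by (simp add: divide_right_mono)
    also have "\<dots> = max ((f (P s) - f xb) / s) ((f (Q s) - f xb) / s)"
      using elim by (auto simp: max_def divide_le_cancel)
    finally show ?case using fx fxt by simp
  qed
  have "gradf xt \<bullet> (M *\<^sub>R d) \<le> max (gradf x \<bullet> (K *\<^sub>R d)) (gradf xb \<bullet> d)"
    by (rule tendsto_le[OF _ LM LR ev]) simp
  hence "M * a \<le> c" using g0 cpos unfolding a_def c_def d_def by simp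
  moreover have "M * a > 2 * a" using M l a cpos by (intro mult_strict_right_mono) auto
  ultimately show False using a by linarith
qed

theorem theorem3:
  fixes \<Gamma> S :: "(real ^ 'n) set"
    and f :: "real ^ 'n \<Rightarrow> real"
    and gradf :: "real ^ 'n \<Rightarrow> real ^ 'n"
    and xbar :: "real ^ 'n"
  assumes "open \<Gamma>" and "convex \<Gamma>"
    and "S \<subseteq> \<Gamma>" and "S \<noteq> {}" and "convex S"
    and grad: "\<And>x. x \<in> \<Gamma> \<Longrightarrow> (f has_derivative (\<lambda>h. gradf x \<bullet> h)) (at x)"
    and "continuous_on \<Gamma> gradf"
    and "quasiconvex_on \<Gamma> f"
    and "xbar \<in> argmin_on S f"
    and "gradf xbar \<noteq> 0"
  defines "S1 \<equiv> {x \<in> S. gradf x \<bullet> (xbar - x) = 0 \<and> gradf x \<noteq> 0}"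
    and "S2 \<equiv> {x \<in> S. gradf x \<bullet> (xbar - x) \<ge> 0 \<and> gradf x \<noteq> 0}"
    and "S3 \<equiv> {x \<in> S. gradf x \<bullet> (xbar - x) = gradf xbar \<bullet> (x - xbar) \<and> gradf x \<noteq> 0}"
    and "S4 \<equiv> {x \<in> S. gradf x \<bullet> (xbar - x) \<ge> gradf xbar \<bullet> (x - xbar) \<and> gradf x \<noteq> 0}"
    and "S5 \<equiv> {x \<in> S. gradf x \<bullet> (xbar - x) = 0 \<and> gradf xbar \<bullet> (x - xbar) = 0 \<and> gradf x \<noteq> 0}"
  shows "argmin_on S f = S1 \<and> S1 = S2 \<and> S2 = S3 \<and> S3 = S4 \<and> S4 = S5"
proof -
  note op = assms(1) and cvG = assms(2) and SG = assms(3) and cvS = assms(5)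
    and cont = assms(7) and qc = assms(8) and nz = assms(10)
  have xbS: "xbar \<in> S" and xbmin: "\<And>y. y \<in> S \<Longrightarrow> f xbar \<le> f y"
    using assms(9) unfolding argmin_on_def by auto
  have xbG: "xbar \<in> \<Gamma>" using xbS SG by auto
  have opt: "gradf xbar \<bullet> (x - xbar) \<ge> 0" if "x \<in> S" for x
  proof (rule opt_cond[OF _ grad[OF xbG]])
    fix s :: real assume "0 \<le> s" "s \<le> 1"
    thus "f (xbar + s *\<^sub>R (x - xbar)) \<ge> f xbar" using xbmin seg_in[OF cvS xbS that] by blast
  qed
  have A: "argmin_on S f \<subseteq> S5"
  proof
    fix x assume "x \<in> argmin_on S f"
    hence xS: "x \<in> S" and xmin: "\<And>y. y \<in> S \<Longrightarrow> f x \<le> f y" unfolding argmin_on_def by auto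
    have xG: "x \<in> \<Gamma>" using xS SG by auto
    have fx: "f x = f xbar" using xmin[OF xbS] xbmin[OF xS] by simp
    have seg1: "f (xbar + s *\<^sub>R (x - xbar)) = f xbar" if "0 \<le> s" "s \<le> 1" for s
    proof -
      have "f (xbar + s *\<^sub>R (x - xbar)) \<le> max (f xbar) (f x)"
        using qc xbG xG that unfolding quasiconvex_on_def by auto
      moreover have "f xbar \<le> f (xbar + s *\<^sub>R (x - xbar))"
        using xbmin seg_in[OF cvS xbS xS that] by blast
      ultimately show ?thesis using fx by simp
    qed
    have seg2: "f (x + s *\<^sub>R (xbar - x)) = f x" if "0 \<le> s" "s \<le> 1" for s
    proof -
      have "f (x + s *\<^sub>R (xbar - x)) \<le> max (f x) (f xbar)"
        using qc xbG xG that unfolding quasiconvex_on_def by auto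
      moreover have "f x \<le> f (x + s *\<^sub>R (xbar - x))"
        using xmin seg_in[OF cvS xS xbS that] by blast
      ultimately show ?thesis using fx by simp
    qed
    have "gradf x \<bullet> (xbar - x) = 0" by (rule const_zero[OF seg2 grad[OF xG]])
    moreover have "gradf xbar \<bullet> (x - xbar) = 0" by (rule const_zero[OF seg1 grad[OF xbG]])
    moreover have "gradf x \<noteq> 0"
      by (rule grad_nonzero[OF qc op cvG xG xbG seg1 grad cont nz])
    ultimately show "x \<in> S5" unfolding S5_def using xS by simp
  qed
  have B: "S2 \<subseteq> argmin_on S f"
  proof
    fix x assume "x \<in> S2"
    hence xS: "x \<in> S" and ge: "gradf x \<bullet> (xbar - x) \<ge> 0" and gz: "gradf x \<noteq> 0"
      unfolding S2_def by auto
    have xG: "x \<in> \<Gamma>" using xS SG by auto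
    have "f xbar \<ge> f x" by (rule pseudo[OF qc op xG xbG grad[OF xG] grad[OF xbG] gz ge])
    thus "x \<in> argmin_on S f" unfolding argmin_on_def using xS xbmin by force
  qed
  have C: "S4 \<subseteq> S2" unfolding S4_def S2_def using opt by (auto intro: order_trans)
  have D: "S5 \<subseteq> S1" "S5 \<subseteq> S3" "S1 \<subseteq> S2" "S3 \<subseteq> S4"
    unfolding S1_def S2_def S3_def S4_def S5_def by auto
  show ?thesis using A B C D by blast
qed

end
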